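(* Let $d\ge 2$ and let $c_0,\dots,c_7\in\mathbb{Z}_d$. If the $d$-state first degree cellular automaton with parameters $\langle c_0,\dots,c_7\rangle$ is reversible for every number of cells $n\in\mathbb{N}$ under the null boundary condition, then $c_0\equiv c_1\equiv c_2\equiv c_3\equiv 0 \pmod{\mathrm{rad}(d)}$.
   Context: Fix an integer $d\ge 2$ and the state set $S=\mathbb{Z}_d=\{0,1,\dots,d-1\}$. A first degree cellular automaton (FDCA) with parameters $\langle c_0,\dots,c_7\rangle$, $c_i\in\mathbb{Z}_d$, is the one-dimensional 3-neighborhood cellular automaton whose local rule $R:S^3\to S$ is $R(x,y,z)=c_0xyz+c_1xy+c_2xz+c_3yz+c_4x+c_5y+c_6z+c_7 \pmod d$. For $n\in\mathbb{N}$, $n\ge1$, the $n$-cell automaton under the null boundary condition acts on configurations $x=(x_0,\dots,x_{n-1})\in S^n$ by the global map $G_n:S^n\to S^n$, $G_n(x)_i=R(x_{i-1},x_i,x_{i+1})$ for $0\le i\le n-1$, with the convention $x_{-1}=x_n=0$. The automaton is reversible for a given $n$ if $G_n$ is a bijection. $\mathrm{rad}(d)=\prod_{p\mid d,\ p\text{ prime}}p$ is the product of the distinct primes dividing $d$; since $\mathrm{rad}(d)\mid d$, congruences of elements of $\mathbb{Z}_d$ modulo $\mathrm{rad}(d)$ are well defined. *)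

theory Defs
  imports "HOL-Computational_Algebra.Primes"
begin

definition fdca_rule :: "nat \<Rightarrow> (nat \<Rightarrow> int) \<Rightarrow> int \<Rightarrow> int \<Rightarrow> int \<Rightarrow> int" where
  "fdca_rule d c x y z =
     (c 0 * x * y * z + c 1 * x * y + c 2 * x * z + c 3 * y * z
      + c 4 * x + c 5 * y + c 6 * z + c 7) mod int d"

definition cell :: "int list \<Rightarrow> int \<Rightarrow> int" where
  "cell xs i = (if 0 \<le> i \<and> i < int (length xs) then xs ! nat i else 0)"

definition fdca_global :: "nat \<Rightarrow> (nat \<Rightarrow> int) \<Rightarrow> int list \<Rightarrow> int list" where
  "fdca_global d c xs =
     map (\<lambda>i. fdca_rule d c (cell xs (int i - 1)) (cell xs (int i)) (cell xs (int i + 1)))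
         [0..<length xs]"

definition configs :: "nat \<Rightarrow> nat \<Rightarrow> int list set" where
  "configs d n = {xs. length xs = n \<and> (\<forall>x\<in>set xs. 0 \<le> x \<and> x < int d)}"

definition fdca_reversible :: "nat \<Rightarrow> (nat \<Rightarrow> int) \<Rightarrow> nat \<Rightarrow> bool" where
  "fdca_reversible d c n \<longleftrightarrow> bij_betw (fdca_global d c) (configs d n) (configs d n)"

definition rad :: "nat \<Rightarrow> nat" where
  "rad d = (\<Prod>p\<in>prime_factors d. p)"

end

theory Submission
  imports Defs "HOL-Number_Theory.Number_Theory"
begin

definition Pol :: "(nat \<Rightarrow> int) \<Rightarrow> int \<Rightarrow> int \<Rightarrow> int \<Rightarrow> int" where
  "Pol c x y z = c 0 * x * y * z + c 1 * x * y + c 2 * x * z + c 3 * y * z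
      + c 4 * x + c 5 * y + c 6 * z + c 7"

lemma rule_Pol: "fdca_rule d c x y z = Pol c x y z mod int d"
  by (simp add: fdca_rule_def Pol_def)

lemma cell_map: "f 0 = 0 \<Longrightarrow> cell (map f xs) i = f (cell xs i)"
  by (auto simp: cell_def nat_less_iff)

lemma reduce:
  assumes "p dvd d"
  shows "fdca_global p c (map (\<lambda>v. v mod int p) xs) = map (\<lambda>v. v mod int p) (fdca_global d c xs)"
proof -
  have *: "Pol c (x mod int p) (y mod int p) (z mod int p) mod int p = Pol c x y z mod int d mod int p" for x y z
  proof -
    have "Pol c (x mod int p) (y mod int p) (z mod int p) mod int p = Pol c x y z mod int p"
      unfolding Pol_def
      by (simp only: flip: cong_def, intro cong_add cong_mult cong_refl; simp add: cong_def)
    also have "\<dots> = Pol c x y z mod int d mod int p" using assms by (simp add: mod_mod_cancel)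
    finally show ?thesis .
  qed
  show ?thesis by (simp add: fdca_global_def rule_Pol cell_map *)
qed

lemma configs_image:
  assumes "p \<le> d" "p > 0"
  shows "configs p n = (map (\<lambda>v. v mod int p)) ` configs d n"
proof
  show "(map (\<lambda>v. v mod int p)) ` configs d n \<subseteq> configs p n"
    using assms by (auto simp: configs_def)
  show "configs p n \<subseteq> (map (\<lambda>v. v mod int p)) ` configs d n"
  proof
    fix xs assume xs: "xs \<in> configs p n"
    then have "map (\<lambda>v. v mod int p) xs = xs" by (auto simp: configs_def intro!: map_idI)
    moreover have "xs \<in> configs d n" using xs assms by (force simp: configs_def)
    ultimately show "xs \<in> (map (\<lambda>v. v mod int p)) ` configs d n" by (metis image_eqI)
  qed
qed

lemma finite_configs: "finite (configs d n)"
proof -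
  have "configs d n \<subseteq> {xs. set xs \<subseteq> {0..<int d} \<and> length xs = n}" by (auto simp: configs_def)
  moreover have "finite {xs. set xs \<subseteq> {0..<int d} \<and> length xs = n}" by (rule finite_lists_length_eq) simp
  ultimately show ?thesis by (rule finite_subset)
qed

lemma inj_mod:
  assumes "p dvd d" "p > 0" "d > 0" "fdca_reversible d c n"
  shows "inj_on (fdca_global p c) (configs p n)"
proof -
  let ?\<pi> = "map (\<lambda>v. v mod int p)"
  have pd: "p \<le> d" using assms by (simp add: dvd_imp_le)
  have "fdca_global p c ` configs p n = fdca_global p c ` ?\<pi> ` configs d n"
    using configs_image[OF pd assms(2)] by simp
  also have "\<dots> = ?\<pi> ` fdca_global d c ` configs d n"
    unfolding image_image using reduce[OF assms(1)] by simp
  also have "fdca_global d c ` configs d n = configs d n"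
    using assms(4) unfolding fdca_reversible_def by (simp add: bij_betw_def)
  finally have "fdca_global p c ` configs p n = configs p n"
    using configs_image[OF pd assms(2)] by simp
  then show ?thesis by (intro eq_card_imp_inj_on finite_configs) simp
qed

lemma inj_use:
  assumes inj: "inj_on (fdca_global p c) (configs p n)" and p: "p > 0"
    and len: "length xs = n" "length ys = n" and eq: "fdca_global p c xs = fdca_global p c ys"
  shows "map (\<lambda>v. v mod int p) xs = map (\<lambda>v. v mod int p) ys"
proof -
  have idm: "map (\<lambda>v. v mod int p) (fdca_global p c zs) = fdca_global p c zs" for zs
    by (simp add: fdca_global_def fdca_rule_def)
  have in1: "map (\<lambda>v. v mod int p) zs \<in> configs p n" if "length zs = n" for zs
    using that p by (auto simp: configs_def)
  have "fdca_global p c (map (\<lambda>v. v mod int p) xs) = fdca_global p c (map (\<lambda>v. v mod int p) ys)"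
    using reduce[of p p c] eq idm by simp
  then show ?thesis using inj_onD[OF inj _ in1 in1] len by blast
qed

lemma g1: "fdca_global p c [a] = [fdca_rule p c 0 a 0]"
  by (simp add: fdca_global_def cell_def)
lemma g2: "fdca_global p c [a,b] = [fdca_rule p c 0 a b, fdca_rule p c a b 0]"
  by (simp add: fdca_global_def cell_def upt_rec)
lemma g3: "fdca_global p c [a,b,e] = [fdca_rule p c 0 a b, fdca_rule p c a b e, fdca_rule p c b e 0]"
  by (simp add: fdca_global_def cell_def upt_rec nth_Cons')
lemma g4: "fdca_global p c [a,b,e,f] = [fdca_rule p c 0 a b, fdca_rule p c a b e, fdca_rule p c b e f, fdca_rule p c e f 0]"
  by (simp add: fdca_global_def cell_def upt_rec nth_Cons')

lemma solve:
  fixes q A B :: int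
  assumes "prime q" "\<not> q dvd A"
  shows "\<exists>y. q dvd (A * y - B)"
proof -
  have "coprime A q" using assms prime_imp_coprime coprime_commute by blast
  then obtain x where "[A * x = 1] (mod q)" using cong_solve_coprime_int by blast
  then have "q dvd (A * x - 1)" by (simp add: cong_iff_dvd_diff)
  then have "q dvd (A * x - 1) * B" by simp
  moreover have "(A * x - 1) * B = A * (x * B) - B" by (simp add: algebra_simps)
  ultimately show ?thesis by metis
qed

lemma two_cell:
  fixes q k b c m e f :: int
  assumes q: "prime q"
    and inj: "\<And>x y x' y'. q dvd (k*x*y + b*x + c*y - (k*x'*y' + b*x' + c*y'))
       \<Longrightarrow> q dvd (m*x*y + e*x + f*y - (m*x'*y' + e*x' + f*y')) \<Longrightarrow> q dvd (x - x') \<and> q dvd (y - y')"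
  shows "q dvd k"
proof (rule ccontr)
  assume nk: "\<not> q dvd k"
  have nq1: "\<not> q dvd 1" "\<not> q dvd (-1)" using q by (auto simp: prime_int_iff)
  obtain X0 where X0: "q dvd (k * X0 - (-c))" using solve[OF q nk] by blast
  obtain X1 where X1: "q dvd (k * X1 - (-b))" using solve[OF q nk] by blast
  have X0': "q dvd (k*X0 + c)" using X0 by simp
  have X1': "q dvd (k*X1 + b)" using X1 by simp
  show False
  proof (cases "q dvd (m*X0 + f)")
    case True
    have "q dvd (k*X0*0 + b*X0 + c*0 - (k*X0*1 + b*X0 + c*1))"
    proof -
      have "k*X0*0 + b*X0 + c*0 - (k*X0*1 + b*X0 + c*1) = -(k*X0 + c)" by (simp add: algebra_simps)
      then show ?thesis using X0' dvd_minus_iff by metis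
    qed
    moreover have "q dvd (m*X0*0 + e*X0 + f*0 - (m*X0*1 + e*X0 + f*1))"
    proof -
      have "m*X0*0 + e*X0 + f*0 - (m*X0*1 + e*X0 + f*1) = -(m*X0 + f)" by (simp add: algebra_simps)
      then show ?thesis using True dvd_minus_iff by metis
    qed
    ultimately have "q dvd (0 - 1)" using inj by blast
    then show False using nq1 by simp
  next
    case nf: False
    show False
    proof (cases "q dvd (m*X1 + e)")
      case True
      have "q dvd (k*0*X1 + b*0 + c*X1 - (k*1*X1 + b*1 + c*X1))"
      proof -
        have "k*0*X1 + b*0 + c*X1 - (k*1*X1 + b*1 + c*X1) = -(k*X1 + b)" by (simp add: algebra_simps)
        then show ?thesis using X1' dvd_minus_iff by metis
      qed
      moreover have "q dvd (m*0*X1 + e*0 + f*X1 - (m*1*X1 + e*1 + f*X1))"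
      proof -
        have "m*0*X1 + e*0 + f*X1 - (m*1*X1 + e*1 + f*X1) = -(m*X1 + e)" by (simp add: algebra_simps)
        then show ?thesis using True dvd_minus_iff by metis
      qed
      ultimately have "q dvd (0 - 1)" using inj by blast
      then show False using nq1 by simp
    next
      case False
      obtain y where y: "q dvd ((m*X0 + f) * y - ((m*X1 + e)*(X0+1) + f*X1 - e*X0))"
        using solve[OF q nf] by blast
      have kk: "q dvd k * (b*X0 - c*X1)"
      proof -
        have "k * (b*X0 - c*X1) = b*(k*X0 + c) - c*(k*X1+b)" by (simp add: algebra_simps)
        then show ?thesis using X0' X1' by (simp add: dvd_diff)
      qed
      then have bc: "q dvd (b*X0 - c*X1)" using q nk by (simp add: prime_dvd_mult_iff)
      have "q dvd (k*X0*y + b*X0 + c*y - (k*(X0+1)*X1 + b*(X0+1) + c*X1))"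
      proof -
        have "k*X0*y + b*X0 + c*y - (k*(X0+1)*X1 + b*(X0+1) + c*X1)
            = y*(k*X0 + c) - (X0+1)*(k*X1 + b) + (b*X0 - c*X1)" (is "_ = ?r") by (simp add: algebra_simps)
        moreover have "q dvd ?r" using X0' X1' bc by (meson dvd_add dvd_diff dvd_mult)
        ultimately show ?thesis by metis
      qed
      moreover have "q dvd (m*X0*y + e*X0 + f*y - (m*(X0+1)*X1 + e*(X0+1) + f*X1))"
      proof -
        have "m*X0*y + e*X0 + f*y - (m*(X0+1)*X1 + e*(X0+1) + f*X1)
            = (m*X0 + f) * y - ((m*X1 + e)*(X0+1) + f*X1 - e*X0)" by (simp add: algebra_simps)
        then show ?thesis using y by metis
      qed
      ultimately have "q dvd (X0 - (X0+1))" using inj by blast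
      then show False using nq1 by simp
    qed
  qed
qed


lemma dvd_eqE: "(x::int) = y \<Longrightarrow> q dvd y \<Longrightarrow> q dvd x" by simp

lemma eqrule: "int p dvd (Pol c x y z - Pol c x' y' z') \<Longrightarrow> fdca_rule p c x y z = fdca_rule p c x' y' z'"
  by (simp add: rule_Pol mod_eq_dvd_iff)

lemma prime_case:
  fixes p :: nat and c :: "nat \<Rightarrow> int"
  assumes pp: "prime p" and inj: "\<And>n. n \<ge> 1 \<Longrightarrow> inj_on (fdca_global p c) (configs p n)"
  shows "int p dvd c 0 \<and> int p dvd c 1 \<and> int p dvd c 2 \<and> int p dvd c 3"
proof -
  define q where "q = int p"
  have q: "prime q" using pp prime_nat_iff_prime[of "int p"] by (simp add: q_def)
  have p0: "p > 0" using pp prime_gt_0_nat by blast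
  have nq1: "\<not> q dvd 1" "\<not> q dvd (-1)" using q by (auto simp: prime_int_iff)
  have C1: "q dvd (a - a')" if "q dvd (Pol c 0 a 0 - Pol c 0 a' 0)" for a a'
  proof -
    have "fdca_global p c [a] = fdca_global p c [a']"
      using that by (simp add: g1 eqrule q_def)
    then have "map (\<lambda>v. v mod int p) [a] = map (\<lambda>v. v mod int p) [a']"
      using inj_use[OF inj[of 1] p0, of "[a]" "[a']"] by simp
    then show ?thesis by (simp add: mod_eq_dvd_iff q_def)
  qed
  have C2: "q dvd (a - a') \<and> q dvd (b - b')"
    if "q dvd (Pol c 0 a b - Pol c 0 a' b')" "q dvd (Pol c a b 0 - Pol c a' b' 0)" for a b a' b'
  proof -
    have "fdca_global p c [a,b] = fdca_global p c [a',b']"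
      using that by (simp add: g2 eqrule q_def)
    then have "map (\<lambda>v. v mod int p) [a,b] = map (\<lambda>v. v mod int p) [a',b']"
      using inj_use[OF inj[of 2] p0, of "[a,b]" "[a',b']"] by simp
    then show ?thesis by (simp add: mod_eq_dvd_iff q_def)
  qed
  have C3: "q dvd (b - b')"
    if "q dvd (Pol c 0 a b - Pol c 0 a' b')" "q dvd (Pol c a b e - Pol c a' b' e')"
       "q dvd (Pol c b e 0 - Pol c b' e' 0)" for a b e a' b' e'
  proof -
    have "fdca_global p c [a,b,e] = fdca_global p c [a',b',e']"
      using that by (simp add: g3 eqrule q_def)
    then have "map (\<lambda>v. v mod int p) [a,b,e] = map (\<lambda>v. v mod int p) [a',b',e']"
      using inj_use[OF inj[of 3] p0, of "[a,b,e]" "[a',b',e']"] by simp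
    then show ?thesis by (simp add: mod_eq_dvd_iff q_def)
  qed
  have C4: "q dvd (e - e')"
    if "q dvd (Pol c 0 a b - Pol c 0 a' b')" "q dvd (Pol c a b e - Pol c a' b' e')"
       "q dvd (Pol c b e f - Pol c b' e' f')" "q dvd (Pol c e f 0 - Pol c e' f' 0)" for a b e f a' b' e' f'
  proof -
    have "fdca_global p c [a,b,e,f] = fdca_global p c [a',b',e',f']"
      using that by (simp add: g4 eqrule q_def)
    then have "map (\<lambda>v. v mod int p) [a,b,e,f] = map (\<lambda>v. v mod int p) [a',b',e',f']"
      using inj_use[OF inj[of 4] p0, of "[a,b,e,f]" "[a',b',e',f']"] by simp
    then show ?thesis by (simp add: mod_eq_dvd_iff q_def)
  qed
  have n5: "\<not> q dvd c 5"
  proof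
    assume "q dvd c 5"
    moreover have "Pol c 0 1 0 - Pol c 0 0 0 = c 5" by (simp add: Pol_def)
    ultimately have "q dvd (1 - 0)" using C1 by metis
    then show False using nq1 by simp
  qed
  have d3: "q dvd c 3"
  proof (rule two_cell[OF q])
    fix x y x' y'
    assume h1: "q dvd (c 3*x*y + c 5*x + c 6*y - (c 3*x'*y' + c 5*x' + c 6*y'))"
      and h2: "q dvd (c 1*x*y + c 4*x + c 5*y - (c 1*x'*y' + c 4*x' + c 5*y'))"
    have "Pol c 0 x y - Pol c 0 x' y' = c 3*x*y + c 5*x + c 6*y - (c 3*x'*y' + c 5*x' + c 6*y')"
      by (simp add: Pol_def algebra_simps)
    moreover have "Pol c x y 0 - Pol c x' y' 0 = c 1*x*y + c 4*x + c 5*y - (c 1*x'*y' + c 4*x' + c 5*y')"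
      by (simp add: Pol_def algebra_simps)
    ultimately show "q dvd (x - x') \<and> q dvd (y - y')" using C2 h1 h2 by metis
  qed
  have d1: "q dvd c 1"
  proof (rule two_cell[OF q])
    fix x y x' y'
    assume h1: "q dvd (c 1*x*y + c 5*x + c 4*y - (c 1*x'*y' + c 5*x' + c 4*y'))"
      and h2: "q dvd (c 3*x*y + c 6*x + c 5*y - (c 3*x'*y' + c 6*x' + c 5*y'))"
    have "Pol c 0 y x - Pol c 0 y' x' = c 3*x*y + c 6*x + c 5*y - (c 3*x'*y' + c 6*x' + c 5*y')"
      by (simp add: Pol_def algebra_simps)
    moreover have "Pol c y x 0 - Pol c y' x' 0 = c 1*x*y + c 5*x + c 4*y - (c 1*x'*y' + c 5*x' + c 4*y')"
      by (simp add: Pol_def algebra_simps)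
    ultimately show "q dvd (x - x') \<and> q dvd (y - y')" using C2 h1 h2 by metis
  qed
  obtain s where hs: "q dvd (c 5 * s - c 6)" using solve[OF q n5] by blast
  obtain t where ht: "q dvd (c 5 * t - c 4)" using solve[OF q n5] by blast
  have u0: "q dvd (Pol c 0 a 0 - Pol c 0 (a - s) 1)" for a
  proof (rule dvd_eqE)
    show "Pol c 0 a 0 - Pol c 0 (a - s) 1 = c 3 * (s - a) + (c 5 * s - c 6)"
      by (simp add: Pol_def algebra_simps)
    show "q dvd c 3 * (s - a) + (c 5 * s - c 6)" using d3 hs by (meson dvd_add dvd_mult2)
  qed
  have u2: "q dvd (Pol c 0 b 0 - Pol c 1 (b - t) 0)" for b
  proof (rule dvd_eqE)
    show "Pol c 0 b 0 - Pol c 1 (b - t) 0 = c 1 * (t - b) + (c 5 * t - c 4)"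
      by (simp add: Pol_def algebra_simps)
    show "q dvd c 1 * (t - b) + (c 5 * t - c 4)" using d1 ht by (meson dvd_add dvd_mult2)
  qed
  have d0: "q dvd c 0"
  proof (rule ccontr)
    assume n0: "\<not> q dvd c 0"
    obtain b where hb: "q dvd (c 0 * b - ((c 0 + c 2) * t + 1))" using solve[OF q n0] by blast
    define K where "K = c 0 * b - (c 0 + c 2) * t"
    define W where "W = - (c 0 + c 2) * s * b + (c 0 + c 2) * s * t - c 4 * s - c 6 * t + c 5"
    define a where "a = - W"
    have hK: "q dvd (K - 1)" using hb by (simp add: K_def algebra_simps)
    have u1: "q dvd (Pol c a 0 b - Pol c (a - s) 1 (b - t))"
    proof (rule dvd_eqE)
      show "Pol c a 0 b - Pol c (a - s) 1 (b - t) = c 1 * (s - a) + c 3 * (t - b) + W * (K - 1)"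
        by (simp add: Pol_def K_def W_def a_def algebra_simps)
      show "q dvd c 1 * (s - a) + c 3 * (t - b) + W * (K - 1)" using d1 d3 hK
        by (meson dvd_add dvd_mult2 dvd_mult)
    qed
    have "q dvd (0 - 1)" using C3[OF u0 u1 u2] .
    then show False using nq1 by simp
  qed
  have d2: "q dvd c 2"
  proof (rule ccontr)
    assume n2: "\<not> q dvd c 2"
    define R where "R = c 2 * s * t - c 4 * s - c 6 * t + c 5"
    have gen: "q dvd (Pol c a 0 b - Pol c (a - s) 1 (b - t))"
      if "q dvd (c 2 * (a * t + s * b) - R)" for a b
    proof (rule dvd_eqE)
      show "Pol c a 0 b - Pol c (a - s) 1 (b - t)
          = c 0 * ((s - a) * (b - t)) + c 1 * (s - a) + c 3 * (t - b) + (c 2 * (a * t + s * b) - R)"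
        by (simp add: Pol_def R_def algebra_simps)
      show "q dvd c 0 * ((s - a) * (b - t)) + c 1 * (s - a) + c 3 * (t - b) + (c 2 * (a * t + s * b) - R)"
        using d0 d1 d3 that by (meson dvd_add dvd_mult2)
    qed
    show False
    proof (cases "q dvd c 2 * t")
      case False
      obtain a where "q dvd (c 2 * t * a - R)" using solve[OF q False] by blast
      then have "q dvd (c 2 * (a * t + s * 0) - R)" by (simp add: algebra_simps)
      then have "q dvd (0 - 1)" using C3[OF u0 gen u2] by blast
      then show False using nq1 by simp
    next
      case T1: True
      show False
      proof (cases "q dvd c 2 * s")
        case False
        obtain b where "q dvd (c 2 * s * b - R)" using solve[OF q False] by blast
        then have "q dvd (c 2 * (0 * t + s * b) - R)" by (simp add: algebra_simps)
        then have "q dvd (0 - 1)" using C3[OF u0 gen u2] by blast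
        then show False using nq1 by simp
      next
        case True
        have qt: "q dvd t" using T1 n2 q by (simp add: prime_dvd_mult_iff)
        have qs: "q dvd s" using True n2 q by (simp add: prime_dvd_mult_iff)
        have q6: "q dvd c 6"
        proof (rule dvd_eqE)
          show "c 6 = c 5 * s - (c 5 * s - c 6)" by simp
          show "q dvd c 5 * s - (c 5 * s - c 6)" using qs hs by (meson dvd_diff dvd_mult)
        qed
        have q4: "q dvd c 4"
        proof (rule dvd_eqE)
          show "c 4 = c 5 * t - (c 5 * t - c 4)" by simp
          show "q dvd c 5 * t - (c 5 * t - c 4)" using qt ht by (meson dvd_diff dvd_mult)
        qed
        have n22: "\<not> q dvd c 2 * c 2" using n2 q by (simp add: prime_dvd_mult_iff)
        obtain x where hx: "q dvd (c 2 * c 2 * x - c 5)" using solve[OF q n22] by blast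
        have v0: "q dvd (Pol c 0 (c 5) 0 - Pol c 0 (c 5) (c 2 * c 5))"
        proof (rule dvd_eqE)
          show "Pol c 0 (c 5) 0 - Pol c 0 (c 5) (c 2 * c 5) = c 3 * (- c 5 * c 2 * c 5) + c 6 * (- c 2 * c 5)"
            by (simp add: Pol_def algebra_simps)
          show "q dvd c 3 * (- c 5 * c 2 * c 5) + c 6 * (- c 2 * c 5)"
            using d3 q6 by (meson dvd_add dvd_mult2)
        qed
        have v1: "q dvd (Pol c (c 5) 0 0 - Pol c (c 5) (c 2 * c 5) (- c 5))"
        proof (rule dvd_eqE)
          show "Pol c (c 5) 0 0 - Pol c (c 5) (c 2 * c 5) (- c 5)
              = c 0 * (c 5 * c 5 * c 2 * c 5) + c 1 * (- c 5 * c 2 * c 5) + c 3 * (c 2 * c 5 * c 5) + c 6 * c 5"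
            by (simp add: Pol_def algebra_simps)
          show "q dvd c 0 * (c 5 * c 5 * c 2 * c 5) + c 1 * (- c 5 * c 2 * c 5) + c 3 * (c 2 * c 5 * c 5) + c 6 * c 5"
            using d0 d1 d3 q6 by (meson dvd_add dvd_mult2)
        qed
        have v2: "q dvd (Pol c 0 0 x - Pol c (c 2 * c 5) (- c 5) x)"
        proof (rule dvd_eqE)
          show "Pol c 0 0 x - Pol c (c 2 * c 5) (- c 5) x
              = c 0 * (c 2 * c 5 * c 5 * x) + c 1 * (c 2 * c 5 * c 5) + c 3 * (c 5 * x) + c 4 * (- c 2 * c 5)
                + (c 2 * c 2 * x - c 5) * (- c 5)"
            by (simp add: Pol_def algebra_simps)
          show "q dvd c 0 * (c 2 * c 5 * c 5 * x) + c 1 * (c 2 * c 5 * c 5) + c 3 * (c 5 * x) + c 4 * (- c 2 * c 5)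
                + (c 2 * c 2 * x - c 5) * (- c 5)"
            using d0 d1 d3 q4 hx by (meson dvd_add dvd_mult2)
        qed
        have v3: "q dvd (Pol c 0 x 0 - Pol c (- c 5) x 0)"
        proof (rule dvd_eqE)
          show "Pol c 0 x 0 - Pol c (- c 5) x 0 = c 1 * (c 5 * x) + c 4 * c 5"
            by (simp add: Pol_def algebra_simps)
          show "q dvd c 1 * (c 5 * x) + c 4 * c 5"
            using d1 q4 by (meson dvd_add dvd_mult2)
        qed
        have "q dvd (0 - (- c 5))" using C4[OF v0 v1 v2 v3] .
        then show False using n5 by simp
      qed
    qed
  qed
  show ?thesis using d0 d1 d2 d3 by (simp add: q_def)
qed

lemma prod_primes_dvd:
  fixes A :: "nat set" and x :: int
  assumes "finite A" "\<forall>p\<in>A. prime p \<and> int p dvd x"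
  shows "int (\<Prod>p\<in>A. p) dvd x"
  using assms
proof (induction A rule: finite_induct)
  case empty
  then show ?case by simp
next
  case (insert p A)
  have pp: "prime p" and px: "int p dvd x" using insert.prems by auto
  have IH: "int (\<Prod>p\<in>A. p) dvd x" using insert.IH insert.prems by auto
  have "\<not> p dvd (\<Prod>p\<in>A. p)"
  proof
    assume "p dvd (\<Prod>p\<in>A. p)"
    then obtain r where "r \<in> A" "p dvd r" using prime_dvd_prod_iff[OF insert.hyps(1) pp] by auto
    moreover then have "prime r" using insert.prems by auto
    ultimately have "p = r" using pp primes_dvd_imp_eq by blast
    then show False using \<open>r \<in> A\<close> insert.hyps(2) by simp
  qed
  then have "coprime p (\<Prod>p\<in>A. p)" using pp prime_imp_coprime by blast
  then have "coprime (int p) (int (\<Prod>p\<in>A. p))" by (simp only: coprime_int_iff)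
  then have "int p * int (\<Prod>p\<in>A. p) dvd x" using px IH divides_mult by blast
  then show ?case using insert.hyps by simp
qed

theorem lemma2:
  fixes d :: nat and c :: "nat \<Rightarrow> int"
  assumes "d \<ge> 2"
    and "\<forall>i<8. 0 \<le> c i \<and> c i < int d"
    and "\<forall>n\<ge>1. fdca_reversible d c n"
  shows "\<forall>i<4. c i mod int (rad d) = 0"
proof -
  have all: "\<forall>p\<in>prime_factors d. prime p \<and> int p dvd c i" if "i < 4" for i
  proof
    fix p assume pf: "p \<in> prime_factors d"
    have pp: "prime p" and pd: "p dvd d" using pf by auto
    have "int p dvd c 0 \<and> int p dvd c 1 \<and> int p dvd c 2 \<and> int p dvd c 3"
    proof (rule prime_case[OF pp])
      fix n :: nat assume "n \<ge> 1"
      then show "inj_on (fdca_global p c) (configs p n)"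
        using inj_mod[OF pd] assms pp prime_gt_0_nat by auto
    qed
    then have "int p dvd c i" proof -
      have "i = 0 \<or> i = 1 \<or> i = 2 \<or> i = 3" using that by arith
      then show ?thesis using \<open>int p dvd c 0 \<and> int p dvd c 1 \<and> int p dvd c 2 \<and> int p dvd c 3\<close> by auto
    qed
    then show "prime p \<and> int p dvd c i" using pp by simp
  qed
  show ?thesis
  proof (intro allI impI)
    fix i :: nat assume "i < 4"
    then have "int (rad d) dvd c i" unfolding rad_def
      using prod_primes_dvd[OF finite_set_mset all] by blast
    then show "c i mod int (rad d) = 0" by simp
  qed
qed

end
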